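(* Let $(R,\mathfrak m)$ be a Noetherian local ring and $\mathfrak p,\mathfrak q$ prime ideals of $R$ with $\mathfrak p+\mathfrak q=\mathfrak m$, $\mathfrak p\cap\mathfrak q=\mathfrak p\mathfrak q$, and $R/\mathfrak q$ a discrete valuation ring. Then $\mathfrak p$ is principal. *)

theory Defs
  imports "HOL-Algebra.Algebra"
begin

definition local_ring :: "('a, 'b) ring_scheme \<Rightarrow> 'a set \<Rightarrow> bool" where
  "local_ring R m \<longleftrightarrow> cring R \<and> maximalideal m R \<and>
     (\<forall>I. maximalideal I R \<longrightarrow> I = m)"

definition DVR :: "('a, 'b) ring_scheme \<Rightarrow> bool" where
  "DVR S \<longleftrightarrow> principal_domain S \<and>
     (\<exists>!P. primeideal P S \<and> P \<noteq> {\<zero>\<^bsub>S\<^esub>})"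

end

theory Submission
  imports Defs
begin

lemma exists_max_ideal:
  fixes R (structure)
  assumes "cring R" "noetherian_ring R" "ideal I R" "I \<noteq> carrier R"
  shows "\<exists>M. maximalideal M R \<and> I \<subseteq> M"
proof -
  interpret cring R by fact
  interpret noetherian_ring R by fact
  define S where "S = {J. ideal J R \<and> I \<subseteq> J \<and> \<one> \<notin> J}"
  have IS: "I \<in> S" using assms(3,4) ideal.one_imp_carrier unfolding S_def by blast
  have "\<exists>M\<in>S. \<forall>J\<in>S. M \<subseteq> J \<longrightarrow> J = M"
  proof (rule subset_Zorn_nonempty)
    show "S \<noteq> {}" using IS by blast
  next
    fix C assume C: "C \<noteq> {}" "subset.chain S C"
    have "subset.chain {J. ideal J R} C"
      using C(2) unfolding pred_on.chain_def S_def by blast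
    then have "\<Union>C \<in> C" using ideal_chain_is_trivial C(1) by blast
    then show "\<Union>C \<in> S" using C(2) unfolding pred_on.chain_def by blast
  qed
  then obtain M where M: "M \<in> S" "\<And>J. J \<in> S \<Longrightarrow> M \<subseteq> J \<Longrightarrow> J = M" by blast
  have "maximalideal M R"
  proof (rule maximalidealI)
    show "ideal M R" using M(1) S_def by blast
    show "carrier R \<noteq> M" using M(1) S_def by auto
    fix J assume J: "ideal J R" "M \<subseteq> J" "J \<subseteq> carrier R"
    show "J = M \<or> J = carrier R"
    proof (cases "\<one> \<in> J")
      case True then show ?thesis using ideal.one_imp_carrier[OF J(1)] by blast
    next
      case False then have "J \<in> S" using J M(1) unfolding S_def by blast
      then show ?thesis using M(2) J(2) by blast
    qed
  qed
  then show ?thesis using M(1) S_def by blast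
qed

lemma local_unit:
  fixes R (structure)
  assumes "noetherian_ring R" "local_ring R m" "u \<in> m"
  shows "\<one> \<ominus> u \<in> Units R"
proof -
  interpret cring R using assms(2) local_ring_def by blast
  interpret noetherian_ring R by fact
  have mm: "maximalideal m R" using assms(2) local_ring_def by blast
  have mi: "ideal m R" using mm maximalideal.axioms(1) by auto
  have uc: "u \<in> carrier R" using ideal.Icarr[OF mi assms(3)] .
  have vc: "\<one> \<ominus> u \<in> carrier R" using uc by simp
  show ?thesis
  proof (rule ccontr)
    assume "\<one> \<ominus> u \<notin> Units R"
    then have "PIdl (\<one> \<ominus> u) \<noteq> carrier R" using ideal_eq_carrier_iff[OF vc] by blast
    then obtain M where M: "maximalideal M R" "PIdl (\<one> \<ominus> u) \<subseteq> M"
      using exists_max_ideal[OF is_cring assms(1) cgenideal_ideal[OF vc]] by blast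
    then have "M = m" using assms(2) local_ring_def by blast
    then have "\<one> \<ominus> u \<in> m" using M cgenideal_self[OF vc] by blast
    then have "(\<one> \<ominus> u) \<oplus> u \<in> m" using assms(3) mi
      by (simp add: additive_subgroup.a_closed ideal.axioms(1))
    moreover have "(\<one> \<ominus> u) \<oplus> u = \<one>" using uc by (simp add: a_minus_def add.m_assoc l_neg)
    ultimately have "m = carrier R" using ideal.one_imp_carrier[OF mi] by simp
    then show False using maximalideal.I_notcarr[OF mm] by simp
  qed
qed

lemma ideal_sub:
  assumes "ideal I R" shows "I \<subseteq> carrier R"
proof
  fix i assume "i \<in> I" then show "i \<in> carrier R" using ideal.Icarr[OF assms] by simp
qed

lemma nak_step:
  fixes R (structure)
  assumes noe: "noetherian_ring R" and loc: "local_ring R m"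
    and N: "ideal N R" and p: "ideal p R" and q: "ideal q R" and qm: "q \<subseteq> m"
    and b: "b \<in> carrier R" and pN: "p = N <+>\<^bsub>R\<^esub> PIdl b"
    and bN: "b \<in> N <+>\<^bsub>R\<^esub> (p \<cdot> q)"
  shows "b \<in> N"
proof -
  interpret cring R using loc local_ring_def by blast
  define T where "T = {n \<oplus> b \<otimes> u | n u. n \<in> N \<and> u \<in> q}"
  have sub: "s \<in> T" if "s \<in> p \<cdot> q" for s
    using that
  proof (induct s rule: ideal_prod.induct)
    case (prod i j)
    from prod(1) obtain n t where nt: "n \<in> N" "t \<in> carrier R" "i = n \<oplus> t \<otimes> b"
      unfolding pN set_add_def' cgenideal_def by blast
    have nc: "n \<in> carrier R" using ideal.Icarr[OF N nt(1)] .
    have jc: "j \<in> carrier R" using ideal.Icarr[OF q prod(2)] .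
    have "i \<otimes> j = n \<otimes> j \<oplus> b \<otimes> (t \<otimes> j)"
      unfolding nt(3) using nt(2) nc jc b by (simp add: l_distr r_distr m_ac)
    moreover have "n \<otimes> j \<in> N" using ideal.I_r_closed[OF N nt(1) jc] .
    moreover have "t \<otimes> j \<in> q" using ideal.I_l_closed[OF q prod(2) nt(2)] .
    ultimately show ?case unfolding T_def by blast
  next
    case (sum s1 s2)
    from sum(2) obtain n1 u1 where 1: "n1 \<in> N" "u1 \<in> q" "s1 = n1 \<oplus> b \<otimes> u1"
      unfolding T_def by blast
    from sum(4) obtain n2 u2 where 2: "n2 \<in> N" "u2 \<in> q" "s2 = n2 \<oplus> b \<otimes> u2"
      unfolding T_def by blast
    have c: "n1 \<in> carrier R" "n2 \<in> carrier R" "u1 \<in> carrier R" "u2 \<in> carrier R"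
      using 1 2 ideal.Icarr[OF N] ideal.Icarr[OF q] by auto
    have "s1 \<oplus> s2 = (n1 \<oplus> n2) \<oplus> b \<otimes> (u1 \<oplus> u2)"
      using 1(3) 2(3) c b by (simp add: r_distr a_ac)
    moreover have "n1 \<oplus> n2 \<in> N"
      using 1(1) 2(1) N by (simp add: additive_subgroup.a_closed ideal.axioms(1))
    moreover have "u1 \<oplus> u2 \<in> q"
      using 1(2) 2(2) q by (simp add: additive_subgroup.a_closed ideal.axioms(1))
    ultimately show ?case unfolding T_def by blast
  qed
  from bN obtain n0 s where ns: "n0 \<in> N" "s \<in> p \<cdot> q" "b = n0 \<oplus> s"
    unfolding set_add_def' by blast
  from sub[OF ns(2)] obtain n1 u where nu: "n1 \<in> N" "u \<in> q" "s = n1 \<oplus> b \<otimes> u"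
    unfolding T_def by blast
  have c: "n0 \<in> carrier R" "n1 \<in> carrier R" "u \<in> carrier R"
    using ideal.Icarr[OF N ns(1)] ideal.Icarr[OF N nu(1)] ideal.Icarr[OF q nu(2)] by auto
  have eq: "b \<otimes> (\<one> \<ominus> u) = n0 \<oplus> n1"
  proof -
    have "b \<otimes> (\<one> \<ominus> u) = b \<ominus> b \<otimes> u" using b c(3) by (simp add: minus_eq r_distr r_minus)
    also have "\<dots> = (n0 \<oplus> (n1 \<oplus> b \<otimes> u)) \<ominus> b \<otimes> u" using ns(3) nu(3) by simp
    also have "\<dots> = n0 \<oplus> n1" using b c by (simp add: a_minus_def a_assoc r_neg)
    finally show ?thesis .
  qed
  have inN: "b \<otimes> (\<one> \<ominus> u) \<in> N" unfolding eq
    using ns(1) nu(1) N by (simp add: additive_subgroup.a_closed ideal.axioms(1))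
  have U: "\<one> \<ominus> u \<in> Units R" using local_unit[OF noe loc subsetD[OF qm nu(2)]] .
  have vc: "\<one> \<ominus> u \<in> carrier R" using c(3) by simp
  have ic: "inv (\<one> \<ominus> u) \<in> carrier R" using Units_inv_closed[OF U] .
  have "(b \<otimes> (\<one> \<ominus> u)) \<otimes> inv (\<one> \<ominus> u) = b \<otimes> ((\<one> \<ominus> u) \<otimes> inv (\<one> \<ominus> u))"
    using m_assoc[OF b vc ic] .
  also have "\<dots> = b" using Units_r_inv[OF U] b by simp
  finally have "b = (b \<otimes> (\<one> \<ominus> u)) \<otimes> inv (\<one> \<ominus> u)" by simp
  moreover have "(b \<otimes> (\<one> \<ominus> u)) \<otimes> inv (\<one> \<ominus> u) \<in> N"
    using ideal.I_r_closed[OF N inN ic] .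
  ultimately show ?thesis by simp
qed

lemma Idl_ideal_eq:
  fixes R (structure)
  assumes "ring R" "ideal N R"
  shows "Idl N = N"
proof -
  interpret ring R by fact
  show ?thesis
    using genideal_minimal[OF assms(2)] genideal_self[OF ideal_sub[OF assms(2)]] by blast
qed

lemma nak_gen:
  fixes R (structure)
  assumes noe: "noetherian_ring R" and loc: "local_ring R m"
    and p: "ideal p R" and q: "ideal q R" and qm: "q \<subseteq> m"
    and x: "x \<in> p" and px: "p \<subseteq> PIdl x <+>\<^bsub>R\<^esub> (p \<cdot> q)" and A: "finite A"
  shows "\<forall>N. ideal N R \<and> x \<in> N \<and> N \<subseteq> p \<and> A \<subseteq> p \<and> p = Idl (N \<union> A) \<longrightarrow> N = p"
  using A
proof (induct A rule: finite_induct)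
  case empty
  interpret cring R using loc local_ring_def by blast
  show ?case using Idl_ideal_eq[OF ring_axioms] by auto
next
  case (insert b A)
  interpret cring R using loc local_ring_def by blast
  show ?case
  proof (intro allI impI)
    fix N assume H: "ideal N R \<and> x \<in> N \<and> N \<subseteq> p \<and> insert b A \<subseteq> p \<and> p = Idl (N \<union> insert b A)"
    have N: "ideal N R" and xN: "x \<in> N" and Np: "N \<subseteq> p" and bp: "b \<in> p" and Ap: "A \<subseteq> p"
      and pI: "p = Idl (N \<union> insert b A)" using H by auto
    have bc: "b \<in> carrier R" using ideal.Icarr[OF p bp] .
    define N' where "N' = N <+>\<^bsub>R\<^esub> PIdl b"
    have N'i: "ideal N' R" unfolding N'_def using add_ideals[OF N cgenideal_ideal[OF bc]] .
    have NN': "N \<subseteq> N'"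
    proof
      fix n assume "n \<in> N"
      moreover have "\<zero> \<in> PIdl b" using bc unfolding cgenideal_def by (auto intro!: exI[of _ \<zero>])
      moreover have "n = n \<oplus> \<zero>" using ideal.Icarr[OF N \<open>n \<in> N\<close>] by simp
      ultimately show "n \<in> N'" unfolding N'_def set_add_def' by blast
    qed
    have bN': "b \<in> N'"
    proof -
      have "\<zero> \<in> N" using N by (simp add: additive_subgroup.zero_closed ideal.axioms(1))
      moreover have "b \<in> PIdl b" using cgenideal_self[OF bc] .
      moreover have "b = \<zero> \<oplus> b" using bc by simp
      ultimately show ?thesis unfolding N'_def set_add_def' by blast
    qed
    have N'p: "N' \<subseteq> p"
    proof
      fix y assume "y \<in> N'"
      then obtain n t where "n \<in> N" "t \<in> carrier R" "y = n \<oplus> t \<otimes> b"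
        unfolding N'_def set_add_def' cgenideal_def by blast
      then show "y \<in> p" using Np ideal.I_l_closed[OF p bp] p
        by (auto simp add: additive_subgroup.a_closed ideal.axioms(1))
    qed
    have "p = Idl (N' \<union> A)"
    proof
      show "Idl (N' \<union> A) \<subseteq> p" using genideal_minimal[OF p] N'p Ap by blast
      have "N \<union> insert b A \<subseteq> Idl (N' \<union> A)"
        using genideal_self[of "N' \<union> A"] NN' bN' N'p Ap ideal_sub[OF p] by blast
      moreover have "N' \<union> A \<subseteq> carrier R" using N'p Ap ideal_sub[OF p] by blast
      ultimately show "p \<subseteq> Idl (N' \<union> A)" unfolding pI
        using genideal_minimal[OF genideal_ideal] by blast
    qed
    then have N'eq: "N' = p" using insert(3) N'i NN' xN N'p Ap by blast
    have "PIdl x \<subseteq> N" using cgenideal_minimal[OF N xN] .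
    then have "b \<in> N <+>\<^bsub>R\<^esub> (p \<cdot> q)" using px bp unfolding set_add_def' by blast
    then have "b \<in> N" using nak_step[OF noe loc N p q qm bc] N'eq N'_def by blast
    then have "PIdl b \<subseteq> N" using cgenideal_minimal[OF N] by blast
    then have "N' \<subseteq> N" unfolding N'_def set_add_def'
      using N by (auto simp add: additive_subgroup.a_closed ideal.axioms(1))
    then show "N = p" using NN' N'eq by blast
  qed
qed


theorem lemma5p3:
  fixes R (structure)
  assumes "noetherian_ring R"
    and "local_ring R m"
    and "primeideal p R" and "primeideal q R"
    and "p <+>\<^bsub>R\<^esub> q = m"
    and "p \<inter> q = ideal_prod R p q"
    and "DVR (R Quot q)"
  shows "principalideal p R"
proof -
  note noe = assms(1) and loc = assms(2)
  interpret cring R using loc local_ring_def by blast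
  interpret noetherian_ring R by fact
  have pi: "ideal p R" using assms(3) primeideal.axioms(1) by blast
  have qi: "ideal q R" using assms(4) primeideal.axioms(1) by blast
  have mm: "maximalideal m R" using loc local_ring_def by blast
  have mi: "ideal m R" using mm maximalideal.axioms(1) by blast
  have z_p: "\<zero> \<in> p" using pi by (simp add: additive_subgroup.zero_closed ideal.axioms(1))
  have z_q: "\<zero> \<in> q" using qi by (simp add: additive_subgroup.zero_closed ideal.axioms(1))
  have qm: "q \<subseteq> m"
  proof
    fix z assume z: "z \<in> q"
    have "z = \<zero> \<oplus> z" using ideal.Icarr[OF qi z] by simp
    then show "z \<in> m" using z z_p assms(5) unfolding set_add_def' by blast
  qed
  have pm: "p \<subseteq> m"
  proof
    fix z assume z: "z \<in> p"
    have "z = z \<oplus> \<zero>" using ideal.Icarr[OF pi z] by simp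
    then show "z \<in> m" using z z_q assms(5) unfolding set_add_def' by blast
  qed
  interpret Q: principal_domain "R Quot q" using assms(7) DVR_def by blast
  have m'i: "ideal ((+>) q ` m) (R Quot q)" using ring_ideal_imp_quot_ideal[OF qi mi] .
  obtain c where c: "c \<in> carrier (R Quot q)" "(+>) q ` m = cgenideal (R Quot q) c"
    using Q.exists_gen[OF m'i] by blast
  have "c \<in> (+>) q ` m" using Q.cgenideal_self[OF c(1)] c(2) by simp
  then obtain a' where a': "a' \<in> m" "c = q +> a'" by blast
  then obtain x z where xz: "x \<in> p" "z \<in> q" "a' = x \<oplus> z"
    using assms(5) unfolding set_add_def' by blast
  have xc: "x \<in> carrier R" using ideal.Icarr[OF pi xz(1)] .
  have zc: "z \<in> carrier R" using ideal.Icarr[OF qi xz(2)] .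
  have "a' \<ominus> x = z"
  proof -
    have "a' \<ominus> x = \<ominus> x \<oplus> (x \<oplus> z)" using xz(3) xc zc by (simp add: minus_eq a_comm[of "x \<oplus> z" "\<ominus> x"])
    also have "\<dots> = (\<ominus> x \<oplus> x) \<oplus> z" using xc zc by (simp add: a_assoc)
    also have "\<dots> = z" using xc zc by (simp add: l_neg)
    finally show ?thesis .
  qed
  then have "q +> a' = q +> x"
    using quotient_eq_iff_same_a_r_cos[OF qi _ xc, of a'] xz(2) xz(3) xc zc by simp
  then have cx: "c = q +> x" using a'(2) by simp
  have key: "\<exists>r\<in>carrier R. a \<ominus> r \<otimes> x \<in> q" if a: "a \<in> p" for a
  proof -
    have ac: "a \<in> carrier R" using ideal.Icarr[OF pi a] .
    have "q +> a \<in> cgenideal (R Quot q) c" using c(2) pm a by blast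
    then obtain Y where Y: "Y \<in> carrier (R Quot q)" "q +> a = Y \<otimes>\<^bsub>R Quot q\<^esub> c"
      unfolding cgenideal_def by blast
    then obtain r where r: "r \<in> carrier R" "Y = q +> r"
      unfolding FactRing_def A_RCOSETS_def' by auto
    have "Y \<otimes>\<^bsub>R Quot q\<^esub> c = [mod q:] (q +> r) \<Otimes> (q +> x)"
      unfolding FactRing_def r(2) cx by simp
    also have "\<dots> = q +> (r \<otimes> x)" using ideal.rcoset_mult_add[OF qi r(1) xc] .
    finally have "q +> a = q +> (r \<otimes> x)" using Y(2) by simp
    then have "a \<ominus> r \<otimes> x \<in> q" using quotient_eq_iff_same_a_r_cos[OF qi ac] r(1) xc by simp
    then show ?thesis using r(1) by blast
  qed
  have px: "p \<subseteq> PIdl x <+>\<^bsub>R\<^esub> (p \<cdot> q)"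
  proof
    fix a assume a: "a \<in> p"
    have ac: "a \<in> carrier R" using ideal.Icarr[OF pi a] .
    obtain r where r: "r \<in> carrier R" "a \<ominus> r \<otimes> x \<in> q" using key[OF a] by blast
    have rx: "r \<otimes> x \<in> p" using ideal.I_l_closed[OF pi xz(1) r(1)] .
    have "a \<ominus> r \<otimes> x \<in> p" using a rx pi
      by (simp add: additive_subgroup.a_closed additive_subgroup.a_inv_closed ideal.axioms(1) minus_eq)
    then have d: "a \<ominus> r \<otimes> x \<in> p \<cdot> q" using r(2) assms(6) by blast
    have "a = r \<otimes> x \<oplus> (a \<ominus> r \<otimes> x)" using ac r(1) xc a_lcomm[of "r \<otimes> x" a "\<ominus> (r \<otimes> x)"] by (simp add: minus_eq r_neg)
    moreover have "r \<otimes> x \<in> PIdl x" unfolding cgenideal_def using r(1) by blast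
    ultimately show "a \<in> PIdl x <+>\<^bsub>R\<^esub> (p \<cdot> q)" using d unfolding set_add_def' by blast
  qed
  obtain A where A: "A \<subseteq> carrier R" "finite A" "p = Idl A" using finetely_gen[OF pi] by blast
  have Ap: "A \<subseteq> p" using genideal_self[OF A(1)] A(3) by simp
  have Xi: "ideal (PIdl x) R" using cgenideal_ideal[OF xc] .
  have Xp: "PIdl x \<subseteq> p" using cgenideal_minimal[OF pi xz(1)] .
  have "p = Idl (PIdl x \<union> A)"
  proof
    show "Idl (PIdl x \<union> A) \<subseteq> p" using genideal_minimal[OF pi] Xp Ap by blast
    have "A \<subseteq> Idl (PIdl x \<union> A)" using genideal_self[of "PIdl x \<union> A"] Xp Ap ideal_sub[OF pi] by blast
    moreover have sub: "PIdl x \<union> A \<subseteq> carrier R" using Xp Ap ideal_sub[OF pi] by blast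
    ultimately have "Idl A \<subseteq> Idl (PIdl x \<union> A)" using genideal_minimal[OF genideal_ideal[OF sub]] by blast
    then show "p \<subseteq> Idl (PIdl x \<union> A)" using A(3) by simp
  qed
  then have "PIdl x = p"
    using nak_gen[OF noe loc pi qi qm xz(1) px A(2)] Xi cgenideal_self[OF xc] Xp Ap by blast
  then show ?thesis using cgenideal_is_principalideal[OF xc] by simp
qed

end
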